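(* Let $A$ be a real $n\times n$ matrix and $\mathbf{c},\mathbf{d}\in\mathbb{R}^n$ with $A+A^T=\mathbf{c}\mathbf{d}^T$, let $K=A-\tfrac12\mathbf{c}\mathbf{d}^T$, $d_{\min}=\min_id_i$, $d_{\max}=\max_id_i$, and define the correspondence $F$ on $[d_{\min},d_{\max}]$ by \[ F(\lambda)=\{\mathbf{d}^T\mathbf{x}:\ (\mathbf{x},\pi)\text{ is an optimal solution of }LP(\lambda)\text{ for some }\pi\in\mathbb{R}\}. \] Then: (i) for every $\lambda\in[d_{\min},d_{\max}]$, $F(\lambda)$ is a nonempty convex subset of $[d_{\min},d_{\max}]$; (ii) if $\lambda\in[d_{\min},d_{\max}]$ and $(\mathbf{x},\pi)$ is an optimal solution of $LP(\lambda)$ with $\mathbf{d}^T\mathbf{x}=\lambda$, then $\mathbf{x}$ is a symmetric Nash equilibrium of $(A,A^T)$; (iii) if $\mathbf{x}$ is a symmetric Nash equilibrium of $(A,A^T)$, then $\lambda=\mathbf{d}^T\mathbf{x}$ lies in $[d_{\min},d_{\max}]$ and $\lambda\in F(\lambda)$. Consequently the fixed points of $F$ are exactly the values $\mathbf{d}^T\mathbf{x}$ for symmetric Nash equilibria $\mathbf{x}$ of $(A,A^T)$.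
   Context: For fixed $\lambda\in\mathbb{R}$, $LP(\lambda)$ is the linear program in variables $\mathbf{x}\in\mathbb{R}^n,\pi\in\mathbb{R}$: maximize $\tfrac12\lambda\,\mathbf{x}^T\mathbf{c}-\pi$ subject to $K\mathbf{x}+\tfrac{\lambda}{2}\mathbf{c}\le\pi\mathbf{1}$ (componentwise), $\mathbf{x}\ge0$, $\sum_ix_i=1$; $\mathbf{1}$ is the all-ones vector. A probability vector $\mathbf{x}$ is a symmetric Nash equilibrium of $(A,A^T)$ if $(\mathbf{x},\mathbf{x})$ is a Nash equilibrium, equivalently, $x_i>0$ implies $(A\mathbf{x})_i=\max_k(A\mathbf{x})_k$. *)

theory Defs
  imports "HOL-Analysis.Analysis"
begin

definition outer :: "real^'n \<Rightarrow> real^'n \<Rightarrow> real^'n^'n" where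
  "outer c d = (\<chi> i j. c $ i * d $ j)"

definition is_prob :: "real^'n \<Rightarrow> bool" where
  "is_prob x \<longleftrightarrow> (\<forall>i. 0 \<le> x $ i) \<and> sum (\<lambda>i. x $ i) UNIV = 1"

definition lp_feasible :: "real^'n^'n \<Rightarrow> real^'n \<Rightarrow> real \<Rightarrow> real^'n \<Rightarrow> real \<Rightarrow> bool" where
  "lp_feasible K c lam x pp \<longleftrightarrow>
     (\<forall>i. (K *v x) $ i + lam / 2 * c $ i \<le> pp) \<and> is_prob x"

definition lp_objective :: "real^'n \<Rightarrow> real \<Rightarrow> real^'n \<Rightarrow> real \<Rightarrow> real" where
  "lp_objective c lam x pp = 1/2 * lam * (x \<bullet> c) - pp"

definition lp_optimal :: "real^'n^'n \<Rightarrow> real^'n \<Rightarrow> real \<Rightarrow> real^'n \<Rightarrow> real \<Rightarrow> bool" where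
  "lp_optimal K c lam x pp \<longleftrightarrow> lp_feasible K c lam x pp \<and>
     (\<forall>y rr. lp_feasible K c lam y rr \<longrightarrow> lp_objective c lam y rr \<le> lp_objective c lam x pp)"

definition corrF :: "real^'n^'n \<Rightarrow> real^'n \<Rightarrow> real^'n \<Rightarrow> real \<Rightarrow> real set" where
  "corrF K c d lam = {d \<bullet> x | x. \<exists>pp. lp_optimal K c lam x pp}"

definition sym_nash :: "real^'n^'n \<Rightarrow> real^'n \<Rightarrow> bool" where
  "sym_nash A x \<longleftrightarrow> is_prob x \<and>
     (\<forall>i. 0 < x $ i \<longrightarrow> (A *v x) $ i = (MAX k. (A *v x) $ k))"

end

theory Submission
  imports Defs
begin

lemma outer_mv: "outer c d *v x = (d \<bullet> x) *\<^sub>R c"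
  by (simp add: vec_eq_iff outer_def matrix_vector_mult_def inner_vec_def sum_distrib_left mult_ac)

lemma inner_prob_le:
  fixes x w :: "real^'n"
  assumes "is_prob x" "\<And>i. w $ i \<le> p"
  shows "x \<bullet> w \<le> p"
proof -
  have "x \<bullet> w = (\<Sum>i\<in>UNIV. x$i * w$i)" by (simp add: inner_vec_def)
  also have "\<dots> \<le> (\<Sum>i\<in>UNIV. x$i * p)"
    using assms by (intro sum_mono mult_left_mono) (auto simp: is_prob_def)
  also have "\<dots> = p" using assms by (simp add: is_prob_def sum_distrib_right[symmetric])
  finally show ?thesis .
qed

lemma inner_prob_ge:
  fixes x w :: "real^'n"
  assumes "is_prob x" "\<And>i. p \<le> w $ i"
  shows "p \<le> x \<bullet> w"
proof -
  have "x \<bullet> w = (\<Sum>i\<in>UNIV. x$i * w$i)" by (simp add: inner_vec_def)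
  moreover have "(\<Sum>i\<in>UNIV. x$i * p) \<le> (\<Sum>i\<in>UNIV. x$i * w$i)"
    using assms by (intro sum_mono mult_left_mono) (auto simp: is_prob_def)
  moreover have "(\<Sum>i\<in>UNIV. x$i * p) = p" using assms by (simp add: is_prob_def sum_distrib_right[symmetric])
  ultimately show ?thesis by simp
qed

lemma skew:
  fixes A :: "real^'n^'n" and c d x :: "real^'n"
  assumes hA: "A + transpose A = outer c d"
  shows "x \<bullet> ((A - (1/2) *\<^sub>R outer c d) *v x) = 0"
proof -
  have t: "x \<bullet> (transpose A *v x) = x \<bullet> (A *v x)"
    by (metis dot_lmul_matrix inner_commute vector_transpose_matrix)
  have "x \<bullet> (A *v x) + x \<bullet> (transpose A *v x) = x \<bullet> ((A + transpose A) *v x)"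
    by (simp add: matrix_vector_mult_add_rdistrib inner_add_right)
  also have "\<dots> = (d \<bullet> x) * (x \<bullet> c)" using hA by (simp add: outer_mv)
  finally have "x \<bullet> (A *v x) = (d \<bullet> x) * (x \<bullet> c) / 2" using t by simp
  moreover have "(A - (1/2) *\<^sub>R outer c d) *v x = A *v x - (1/2) *\<^sub>R (outer c d *v x)"
    by (simp add: matrix_vector_mult_diff_rdistrib scaleR_matrix_vector_assoc)
  ultimately show ?thesis by (simp add: outer_mv inner_diff_right)
qed

lemma prob_simplex:
  "compact {x::real^'n. is_prob x} \<and> convex {x::real^'n. is_prob x} \<and> {x::real^'n. is_prob x} \<noteq> {}"
proof (intro conjI)
  let ?S = "{x::real^'n. is_prob x}"
  have "?S = (\<Inter>i. {x. 0 \<le> x$i}) \<inter> {x. sum (\<lambda>i. x$i) UNIV = 1}"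
    by (auto simp: is_prob_def)
  moreover have clc: "closed {x::real^'n. 0 \<le> x$i}" for i
    using closed_Collect_le[of "\<lambda>x. 0::real" "\<lambda>x::real^'n. x$i"] continuous_on_component[OF continuous_on_id] by auto
  moreover have "closed ((\<Inter>i. {x::real^'n. 0 \<le> x$i}) \<inter> {x. sum (\<lambda>i. x$i) UNIV = 1})"
    using clc by (intro closed_Int closed_INT closed_Collect_eq continuous_intros) auto
  ultimately have cl: "closed ?S" by simp
  have "bounded ?S"
  proof (rule boundedI[where B=1])
    fix x assume "x \<in> ?S"
    then show "norm x \<le> 1" using norm_le_l1_cart[of x] by (simp add: is_prob_def)
  qed
  with cl show "compact ?S" using compact_eq_bounded_closed by blast
  show "convex ?S"
    unfolding convex_def is_prob_def
    by (auto simp: sum.distrib sum_distrib_left[symmetric])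
  have "is_prob (\<chi> i. 1 / real CARD('n) :: real^'n)"
    by (simp add: is_prob_def)
  then show "?S \<noteq> {}" by blast
qed


lemma nash_fix:
  fixes w :: "real^'n \<Rightarrow> real^'n"
  assumes cont: "continuous_on UNIV w"
  shows "\<exists>x. is_prob x \<and> (\<forall>j. w x $ j \<le> x \<bullet> w x)"
proof -
  define S where "S = {x::real^'n. is_prob x}"
  define phi where "phi x = (\<chi> i. max 0 (w x $ i - x \<bullet> w x))" for x
  define f where "f x = (1 / (1 + sum (\<lambda>j. phi x $ j) UNIV)) *\<^sub>R (x + phi x)" for x
  have phinn: "0 \<le> phi x $ i" for x i by (simp add: phi_def)
  have sphinn: "0 \<le> sum (\<lambda>j. phi x $ j) UNIV" for x by (intro sum_nonneg phinn)
  have contw: "continuous_on S w" using cont continuous_on_subset by blast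
  have "continuous_on S phi" unfolding phi_def
    by (intro continuous_intros contw)
  then have contf: "continuous_on S f" unfolding f_def
    using sphinn by (intro continuous_intros) (auto simp: add_nonneg_eq_0_iff)
  have fim: "f \<in> S \<rightarrow> S"
  proof
    fix x assume "x \<in> S"
    then have px: "is_prob x" by (simp add: S_def)
    let ?s = "sum (\<lambda>j. phi x $ j) UNIV"
    have "0 \<le> f x $ i" for i using px phinn[of x i] sphinn[of x]
      by (simp add: f_def is_prob_def)
    moreover have "sum (\<lambda>i. f x $ i) UNIV = 1"
    proof -
      have "sum (\<lambda>i. f x $ i) UNIV = (1 / (1 + ?s)) * (sum (\<lambda>i. x $ i) UNIV + ?s)"
        by (simp add: f_def sum_divide_distrib[symmetric] sum.distrib)
      also have "\<dots> = 1" using px sphinn[of x] by (simp add: is_prob_def)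
      finally show ?thesis .
    qed
    ultimately show "f x \<in> S" by (simp add: S_def is_prob_def)
  qed
  obtain x where xS: "x \<in> S" and fx: "f x = x"
    using brouwer[OF _ _ _ contf fim] prob_simplex S_def by metis
  have px: "is_prob x" using xS by (simp add: S_def)
  let ?u = "x \<bullet> w x"
  let ?s = "sum (\<lambda>j. phi x $ j) UNIV"
  have "\<exists>i. 0 < x$i \<and> w x $ i \<le> ?u"
  proof (rule ccontr)
    assume H: "\<not> ?thesis"
    have "\<exists>i. 0 < x$i"
    proof (rule ccontr)
      assume "\<not> ?thesis"
      then have "\<forall>i. x$i = 0" using px by (metis is_prob_def order_le_less)
      then show False using px by (simp add: is_prob_def)
    qed
    then obtain i where i: "0 < x$i" by blast
    have "0 < (\<Sum>k\<in>UNIV. x$k * (w x $ k - ?u))"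
    proof (rule sum_pos2[of UNIV i])
      show "0 < x$i * (w x $ i - ?u)" using H i by auto
      show "0 \<le> x$k * (w x $ k - ?u)" if "k \<in> UNIV" for k
      proof (cases "x$k = 0")
        case False
        then have "0 < x$k" using px by (metis is_prob_def order_le_less)
        then show ?thesis using H by (auto simp: not_le)
      qed simp
    qed auto
    also have "(\<Sum>k\<in>UNIV. x$k * (w x $ k - ?u)) = ?u - ?u * sum (\<lambda>k. x$k) UNIV"
      by (simp add: right_diff_distrib sum_subtractf inner_vec_def sum_distrib_right[symmetric] mult.commute)
    also have "\<dots> = 0" using px by (simp add: is_prob_def)
    finally show False by simp
  qed
  then obtain i where i: "0 < x$i" "w x $ i \<le> ?u" by blast
  have "phi x $ i = 0" using i by (simp add: phi_def)
  moreover have "f x $ i = x $ i" using fx by simp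
  ultimately have "x $ i / (1 + ?s) = x $ i" by (simp add: f_def)
  then have "?s = 0" using i(1) sphinn[of x]
    by (simp add: field_simps)
  then have "\<forall>j\<in>UNIV. phi x $ j = 0" using sum_nonneg_eq_0_iff[of UNIV "\<lambda>j. phi x $ j"] phinn by auto
  then have "\<forall>j. w x $ j \<le> ?u"
    by (metis (no_types, lifting) UNIV_I diff_le_0_iff_le max.cobounded2 phi_def vec_lambda_beta)
  with px show ?thesis by blast
qed

lemma feas_le:
  fixes K :: "real^'n^'n"
  assumes skew: "\<And>x. x \<bullet> (K *v x) = 0" and f: "lp_feasible K c lam x pp"
  shows "lam/2 * (x \<bullet> c) \<le> pp"
proof -
  have "x \<bullet> (K *v x + (lam/2) *\<^sub>R c) = lam/2 * (x \<bullet> c)"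
    using skew[of x] by (simp add: inner_add_right)
  moreover have "x \<bullet> (K *v x + (lam/2) *\<^sub>R c) \<le> pp"
    using f by (intro inner_prob_le) (auto simp: lp_feasible_def)
  ultimately show ?thesis by simp
qed

lemma exists_zero:
  fixes K :: "real^'n^'n"
  assumes skew: "\<And>x. x \<bullet> (K *v x) = 0"
  shows "\<exists>x0. lp_feasible K c lam x0 (lam/2 * (x0 \<bullet> c))"
proof -
  have "continuous_on UNIV (\<lambda>x. K *v x + (lam/2) *\<^sub>R c)"
    using linear_continuous_on[OF matrix_vector_mul_bounded_linear[of K]] by (intro continuous_intros) auto
  then obtain x where px: "is_prob x" and le: "\<forall>j. (K *v x + (lam/2) *\<^sub>R c) $ j \<le> x \<bullet> (K *v x + (lam/2) *\<^sub>R c)"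
    using nash_fix by blast
  have eq: "x \<bullet> (K *v x + (lam/2) *\<^sub>R c) = lam/2 * (x \<bullet> c)"
    using skew[of x] by (simp add: inner_add_right)
  have "\<forall>j. (K *v x)$j + lam/2*c$j \<le> lam/2*(x \<bullet> c)"
    using le unfolding eq by simp
  then show ?thesis using px unfolding lp_feasible_def by blast
qed

lemma opt_iff:
  fixes K :: "real^'n^'n"
  assumes skew: "\<And>x. x \<bullet> (K *v x) = 0"
  shows "lp_optimal K c lam x pp \<longleftrightarrow> lp_feasible K c lam x pp \<and> pp = lam/2 * (x \<bullet> c)"
proof
  assume o: "lp_optimal K c lam x pp"
  obtain x0 where f0: "lp_feasible K c lam x0 (lam/2 * (x0 \<bullet> c))" using exists_zero[OF skew] by blast
  have "lp_objective c lam x0 (lam/2 * (x0 \<bullet> c)) \<le> lp_objective c lam x pp"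
    using o f0 unfolding lp_optimal_def by blast
  then have "pp \<le> lam/2 * (x \<bullet> c)" by (simp add: lp_objective_def)
  moreover have "lp_feasible K c lam x pp" using o by (simp add: lp_optimal_def)
  ultimately show "lp_feasible K c lam x pp \<and> pp = lam/2 * (x \<bullet> c)"
    using feas_le[OF skew] by (meson antisym)
next
  assume H: "lp_feasible K c lam x pp \<and> pp = lam/2 * (x \<bullet> c)"
  have "lp_objective c lam y rr \<le> lp_objective c lam x pp" if "lp_feasible K c lam y rr" for y rr
    using feas_le[OF skew that] H by (simp add: lp_objective_def)
  then show "lp_optimal K c lam x pp" using H unfolding lp_optimal_def by blast
qed

lemma dbounds:
  fixes d x :: "real^'n"
  assumes "is_prob x"
  shows "(MIN i. d$i) \<le> d \<bullet> x \<and> d \<bullet> x \<le> (MAX i. d$i)"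
proof
  show "(MIN i. d$i) \<le> d \<bullet> x"
    using inner_prob_ge[OF assms, of "MIN i. d$i" d] by (simp add: inner_commute)
  show "d \<bullet> x \<le> (MAX i. d$i)"
    using inner_prob_le[OF assms, of d "MAX i. d$i"] by (simp add: inner_commute)
qed

theorem theorem4p5:
  fixes A :: "real^'n^'n" and c d :: "real^'n"
  assumes hA: "A + transpose A = outer c d"
  defines "K \<equiv> A - (1/2) *\<^sub>R outer c d"
      and "dmin \<equiv> (MIN i. d $ i)"
      and "dmax \<equiv> (MAX i. d $ i)"
  shows "(\<forall>lam\<in>{dmin..dmax}. corrF K c d lam \<noteq> {} \<and> convex (corrF K c d lam)
            \<and> corrF K c d lam \<subseteq> {dmin..dmax})
    \<and> (\<forall>lam\<in>{dmin..dmax}. \<forall>x pp. lp_optimal K c lam x pp \<and> d \<bullet> x = lam \<longrightarrow> sym_nash A x)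
    \<and> (\<forall>x. sym_nash A x \<longrightarrow> d \<bullet> x \<in> {dmin..dmax} \<and> d \<bullet> x \<in> corrF K c d (d \<bullet> x))
    \<and> {lam\<in>{dmin..dmax}. lam \<in> corrF K c d lam} = {d \<bullet> x | x. sym_nash A x}"
proof -
  have skewK: "\<And>x. x \<bullet> (K *v x) = 0" using skew[OF hA] unfolding K_def by blast
  note opt = opt_iff[OF skewK]
  have db: "is_prob x \<Longrightarrow> d \<bullet> x \<in> {dmin..dmax}" for x
    using dbounds[of x d] unfolding dmin_def dmax_def by auto
  have Av: "A *v x = K *v x + ((d \<bullet> x)/2) *\<^sub>R c" for x
    unfolding K_def by (simp add: matrix_vector_mult_diff_rdistrib scaleR_matrix_vector_assoc[symmetric] outer_mv)
  have P1: "corrF K c d lam \<noteq> {} \<and> convex (corrF K c d lam) \<and> corrF K c d lam \<subseteq> {dmin..dmax}" for lam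
  proof (intro conjI)
    obtain x0 where "lp_feasible K c lam x0 (lam/2 * (x0 \<bullet> c))" using exists_zero[OF skewK] by blast
    then have "lp_optimal K c lam x0 (lam/2 * (x0 \<bullet> c))" using opt by blast
    then show "corrF K c d lam \<noteq> {}" unfolding corrF_def by blast
    show "corrF K c d lam \<subseteq> {dmin..dmax}"
      unfolding corrF_def using db by (auto simp: opt lp_feasible_def)
    show "convex (corrF K c d lam)"
      unfolding convex_def
    proof (intro ballI allI impI)
      fix a b and u v :: real
      assume a: "a \<in> corrF K c d lam" and b: "b \<in> corrF K c d lam" and uv: "0 \<le> u" "0 \<le> v" "u + v = 1"
      obtain x1 p1 where x1: "a = d \<bullet> x1" "lp_optimal K c lam x1 p1" using a unfolding corrF_def by blast
      obtain x2 p2 where x2: "b = d \<bullet> x2" "lp_optimal K c lam x2 p2" using b unfolding corrF_def by blast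
      let ?x = "u *\<^sub>R x1 + v *\<^sub>R x2" and ?p = "u * p1 + v * p2"
      have f1: "lp_feasible K c lam x1 p1" "p1 = lam/2 * (x1 \<bullet> c)" using x1 opt by auto
      have f2: "lp_feasible K c lam x2 p2" "p2 = lam/2 * (x2 \<bullet> c)" using x2 opt by auto
      have "lp_feasible K c lam ?x ?p"
        unfolding lp_feasible_def is_prob_def
      proof (intro conjI allI)
        fix i
        have "(K *v ?x) $ i + lam / 2 * c $ i = u * ((K *v x1) $ i + lam / 2 * c $ i) + v * ((K *v x2) $ i + lam / 2 * c $ i)"
          using uv by (simp add: matrix_vector_right_distrib scaleR_matrix_vector_assoc[symmetric] algebra_simps)
            (metis distrib_left mult.commute mult.left_neutral)
        also have "\<dots> \<le> ?p" using f1(1) f2(1) uv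
          by (intro add_mono mult_left_mono) (auto simp: lp_feasible_def)
        finally show "(K *v ?x) $ i + lam / 2 * c $ i \<le> ?p" .
        show "0 \<le> ?x $ i" using f1(1) f2(1) uv by (auto simp: lp_feasible_def is_prob_def)
        show "sum (\<lambda>i. ?x $ i) UNIV = 1" using f1(1) f2(1) uv
          by (simp add: lp_feasible_def is_prob_def sum.distrib sum_distrib_left[symmetric])
      qed
      moreover have "?p = lam/2 * (?x \<bullet> c)"
      proof -
        have e: "?x \<bullet> c = u * (x1 \<bullet> c) + v * (x2 \<bullet> c)" by (simp add: inner_add_left)
        show ?thesis unfolding e f1(2) f2(2) by (simp add: algebra_simps)
      qed
      ultimately have "lp_optimal K c lam ?x ?p" using opt by blast
      moreover have "u *\<^sub>R a + v *\<^sub>R b = d \<bullet> ?x" using x1 x2 by (simp add: inner_add_right)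
      ultimately show "u *\<^sub>R a + v *\<^sub>R b \<in> corrF K c d lam" unfolding corrF_def by blast
    qed
  qed
  have P2: "sym_nash A x" if o: "lp_optimal K c lam x pp" and dx: "d \<bullet> x = lam" for lam x pp
  proof -
    have f: "lp_feasible K c lam x pp" and pe: "pp = lam/2 * (x \<bullet> c)" using o opt by auto
    have px: "is_prob x" using f by (simp add: lp_feasible_def)
    have vi: "(A *v x) $ i = (K *v x) $ i + lam/2 * c $ i" for i using dx by (simp add: Av)
    have vle: "(A *v x) $ i \<le> pp" for i using f vi by (simp add: lp_feasible_def)
    have xv: "x \<bullet> (A *v x) = pp" using skewK[of x] pe dx by (simp add: Av inner_add_right)
    have veq: "(A *v x) $ i = pp" if "0 < x $ i" for i
    proof (rule ccontr)
      assume "(A *v x) $ i \<noteq> pp"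
      then have lt: "(A *v x) $ i < pp" using vle[of i] by simp
      have "(\<Sum>k\<in>UNIV. x$k * (A *v x)$k) < (\<Sum>k\<in>UNIV. x$k * pp)"
      proof (rule sum_strict_mono_ex1)
        show "\<forall>k\<in>UNIV. x$k * (A *v x)$k \<le> x$k * pp" using px vle by (auto simp: is_prob_def intro: mult_left_mono)
        show "\<exists>k\<in>UNIV. x$k * (A *v x)$k < x$k * pp" using lt that by (intro bexI[of _ i]) auto
      qed simp
      also have "\<dots> = pp" using px by (simp add: is_prob_def sum_distrib_right[symmetric])
      finally show False using xv by (simp add: inner_vec_def)
    qed
    show ?thesis unfolding sym_nash_def
    proof (intro conjI allI impI)
      show "is_prob x" by fact
      fix i assume "0 < x $ i"
      then have "(A *v x) $ i = pp" by (rule veq)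
      moreover have "(MAX k. (A *v x) $ k) = pp"
        using vle \<open>(A *v x) $ i = pp\<close> by (intro Max_eqI) auto
      ultimately show "(A *v x) $ i = (MAX k. (A *v x) $ k)" by simp
    qed
  qed
  have P3: "d \<bullet> x \<in> {dmin..dmax} \<and> d \<bullet> x \<in> corrF K c d (d \<bullet> x)" if sn: "sym_nash A x" for x
  proof
    have px: "is_prob x" using sn by (simp add: sym_nash_def)
    then show "d \<bullet> x \<in> {dmin..dmax}" by (rule db)
    define M where "M = (MAX k. (A *v x) $ k)"
    define lam where "lam = d \<bullet> x"
    have vi: "(A *v x) $ i = (K *v x) $ i + lam/2 * c $ i" for i by (simp add: Av lam_def)
    have vle: "(A *v x) $ i \<le> M" for i unfolding M_def by (intro Max_ge) auto
    have "x \<bullet> (A *v x) = (\<Sum>k\<in>UNIV. x$k * M)"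
      unfolding inner_vec_def inner_real_def
    proof (rule sum.cong[OF refl])
      fix k assume "k \<in> (UNIV::'n set)"
      show "x$k * (A *v x)$k = x$k * M"
      proof (cases "x$k = 0")
        case False
        then have "0 < x$k" using px by (metis is_prob_def order_le_less)
        then show ?thesis using sn by (simp add: sym_nash_def M_def)
      next
        case True
        then show ?thesis by simp
      qed
    qed
    also have "\<dots> = M" using px by (simp add: is_prob_def sum_distrib_right[symmetric])
    finally have "M = lam/2 * (x \<bullet> c)" using skewK[of x] by (simp add: Av lam_def inner_add_right)
    moreover have "lp_feasible K c lam x M" using px vle vi by (simp add: lp_feasible_def)
    ultimately have "lp_optimal K c lam x M" using opt by blast
    then show "d \<bullet> x \<in> corrF K c d (d \<bullet> x)" unfolding corrF_def lam_def by blast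
  qed
  have P4: "{lam\<in>{dmin..dmax}. lam \<in> corrF K c d lam} = {d \<bullet> x | x. sym_nash A x}"
  proof
    show "{lam\<in>{dmin..dmax}. lam \<in> corrF K c d lam} \<subseteq> {d \<bullet> x | x. sym_nash A x}"
    proof
      fix lam assume "lam \<in> {lam\<in>{dmin..dmax}. lam \<in> corrF K c d lam}"
      then obtain x pp where "lam = d \<bullet> x" "lp_optimal K c lam x pp" unfolding corrF_def by blast
      then show "lam \<in> {d \<bullet> x | x. sym_nash A x}" using P2 by blast
    qed
    show "{d \<bullet> x | x. sym_nash A x} \<subseteq> {lam\<in>{dmin..dmax}. lam \<in> corrF K c d lam}"
      using P3 by blast
  qed
  show ?thesis using P1 P2 P3 P4 by blast
qed

end
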